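(* Let $\varphi_1,\dots,\varphi_k\in\mathrm{Cvx}(\mathbb{R}^n)$ satisfy $\varphi_i(x)\ge 0$ for all $1\le i\le k$ and $x\in\mathbb{R}^n$, and let $\lambda_1,\dots,\lambda_k>0$. Define \[ g_1(x)=\inf\Big\{\sum_{i=1}^k\lambda_i\varphi_i(y_i):\ \sum_{i=1}^k\lambda_iy_i=x\Big\},\qquad g_2(x)=\inf\Big\{\max_{1\le i\le k}\varphi_i(y_i):\ \sum_{i=1}^k\lambda_iy_i=x\Big\}, \] i.e. $g_1=\lambda_1\cdot\varphi_1\,\square\,\cdots\,\square\,\lambda_k\cdot\varphi_k$ and $g_2=\lambda_1\odot\varphi_1\oplus\cdots\oplus\lambda_k\odot\varphi_k$. Then for every $x\in\mathbb{R}^n$, \[ \Big(\sum_{i}\lambda_i\Big)^{-1}g_1(x)\le g_2(x)\le\big(\min_i\lambda_i\big)^{-1}g_1(x). \]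
   Context: $\mathrm{Cvx}(\mathbb{R}^n)$ is the class of convex lower semicontinuous functions $\varphi:\mathbb{R}^n\to(-\infty,\infty]$. The inf-convolution is $(\varphi\,\square\,\psi)(x)=\inf_y[\varphi(y)+\psi(x-y)]$ with homothety $(\lambda\cdot\varphi)(x)=\lambda\varphi(x/\lambda)$; the operation $\oplus$ is $(\varphi\oplus\psi)(x)=\inf_y\max\{\varphi(y),\psi(x-y)\}$ with homothety $(\lambda\odot\varphi)(x)=\varphi(x/\lambda)$. *)

theory Defs
  imports "HOL-Analysis.Analysis"
begin

text \<open>Cvx(R^n): convex lower semicontinuous functions with values in (-inf, inf],
  expressed via the epigraph: convex and closed epigraph, never -inf.\<close>
definition cvx :: "('a::euclidean_space \<Rightarrow> ereal) \<Rightarrow> bool" where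
  "cvx \<phi> \<longleftrightarrow> (\<forall>x. \<phi> x \<noteq> -\<infinity>)
     \<and> convex {(x, t::real). \<phi> x \<le> ereal t}
     \<and> closed {(x, t::real). \<phi> x \<le> ereal t}"

definition g1 :: "nat \<Rightarrow> (nat \<Rightarrow> real) \<Rightarrow> (nat \<Rightarrow> 'a::euclidean_space \<Rightarrow> ereal) \<Rightarrow> 'a \<Rightarrow> ereal" where
  "g1 k lam \<phi> x = Inf {(\<Sum>i<k. ereal (lam i) * \<phi> i (y i)) | y. (\<Sum>i<k. lam i *\<^sub>R y i) = x}"

definition g2 :: "nat \<Rightarrow> (nat \<Rightarrow> real) \<Rightarrow> (nat \<Rightarrow> 'a::euclidean_space \<Rightarrow> ereal) \<Rightarrow> 'a \<Rightarrow> ereal" where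
  "g2 k lam \<phi> x = Inf {Max ((\<lambda>i. \<phi> i (y i)) ` {..<k}) | y. (\<Sum>i<k. lam i *\<^sub>R y i) = x}"

end

theory Submission
  imports Defs
begin

lemma ptwise1:
  fixes lam :: "nat \<Rightarrow> real" and f :: "nat \<Rightarrow> ereal"
  assumes "k \<ge> 1" "\<And>i. i < k \<Longrightarrow> f i \<ge> 0" "\<And>i. i < k \<Longrightarrow> lam i > 0"
  shows "(\<Sum>i<k. ereal (lam i) * f i) \<le> ereal (\<Sum>i<k. lam i) * Max (f ` {..<k})"
proof -
  let ?M = "Max (f ` {..<k})"
  have "(\<Sum>i<k. ereal (lam i) * f i) \<le> (\<Sum>i<k. ereal (lam i) * ?M)"
  proof (rule sum_mono)
    fix i assume "i \<in> {..<k}"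
    hence "f i \<le> ?M" by simp
    thus "ereal (lam i) * f i \<le> ereal (lam i) * ?M"
      using assms(3)[of i] \<open>i \<in> {..<k}\<close> by (intro ereal_mult_left_mono) (auto simp: less_imp_le)
  qed
  also have "\<dots> = (\<Sum>i<k. ereal (lam i)) * ?M"
    by (rule sum_ereal_left_distrib[symmetric]) (use assms(3) in \<open>auto intro: less_imp_le\<close>)
  also have "\<dots> = ereal (\<Sum>i<k. lam i) * ?M" by simp
  finally show ?thesis .
qed

lemma ptwise2:
  fixes lam :: "nat \<Rightarrow> real" and f :: "nat \<Rightarrow> ereal"
  assumes "k \<ge> 1" "\<And>i. i < k \<Longrightarrow> f i \<ge> 0" "\<And>i. i < k \<Longrightarrow> lam i > 0"
  shows "Max (f ` {..<k}) \<le> ereal (1 / Min (lam ` {..<k})) * (\<Sum>i<k. ereal (lam i) * f i)"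
proof -
  let ?m = "Min (lam ` {..<k})"
  have ne: "{..<k} \<noteq> {}" using assms(1) by (simp add: lessThan_empty_iff)
  obtain j where j: "j < k" "Max (f ` {..<k}) = f j"
  proof -
    have "Max (f ` {..<k}) \<in> f ` {..<k}" using ne by (intro Max_in) auto
    then show ?thesis using that by auto
  qed
  obtain j' where j': "j' < k" "?m = lam j'"
  proof -
    have "Min (lam ` {..<k}) \<in> lam ` {..<k}" using ne by (intro Min_in) auto
    then show ?thesis using that by auto
  qed
  have mpos: "?m > 0" using j' assms(3) by auto
  have mle: "?m \<le> lam j" using j by auto
  have "f j = ereal (1 / ?m) * (ereal ?m * f j)"
    using mpos by (simp add: mult.assoc[symmetric] times_ereal.simps)
  also have "\<dots> \<le> ereal (1 / ?m) * (ereal (lam j) * f j)"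
    using mpos mle assms(2)[OF j(1)] by (intro ereal_mult_left_mono ereal_mult_right_mono) auto
  also have "\<dots> \<le> ereal (1 / ?m) * (\<Sum>i<k. ereal (lam i) * f i)"
  proof (intro ereal_mult_left_mono)
    show "ereal (lam j) * f j \<le> (\<Sum>i<k. ereal (lam i) * f i)"
    proof -
      have "(\<Sum>i<k. ereal (lam i) * f i) = ereal (lam j) * f j + (\<Sum>i\<in>{..<k}-{j}. ereal (lam i) * f i)"
        using j(1) by (subst sum.remove[of _ j]) auto
      moreover have "(\<Sum>i\<in>{..<k}-{j}. ereal (lam i) * f i) \<ge> 0"
        using assms(2,3) by (intro sum_nonneg ereal_0_le_mult) (auto simp: less_imp_le)
      ultimately show ?thesis by (simp add: add_increasing2)
    qed
  qed (use mpos in auto)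
  finally show ?thesis using j by simp
qed

theorem proposition2p8:
  fixes k :: nat and lam :: "nat \<Rightarrow> real" and \<phi> :: "nat \<Rightarrow> 'a::euclidean_space \<Rightarrow> ereal"
  assumes "k \<ge> 1"
    and "\<And>i. i < k \<Longrightarrow> cvx (\<phi> i)"
    and "\<And>i x. i < k \<Longrightarrow> \<phi> i x \<ge> 0"
    and "\<And>i. i < k \<Longrightarrow> lam i > 0"
  shows "ereal (1 / (\<Sum>i<k. lam i)) * g1 k lam \<phi> x \<le> g2 k lam \<phi> x
       \<and> g2 k lam \<phi> x \<le> ereal (1 / Min (lam ` {..<k})) * g1 k lam \<phi> x"
proof
  let ?S = "\<Sum>i<k. lam i"
  let ?m = "Min (lam ` {..<k})"
  have ne: "{..<k} \<noteq> {}" using assms(1) by (simp add: lessThan_empty_iff)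
  have Spos: "?S > 0" using ne assms(4) by (intro sum_pos) auto
  obtain j' where j': "j' < k" "?m = lam j'"
  proof -
    have "Min (lam ` {..<k}) \<in> lam ` {..<k}" using ne by (intro Min_in) auto
    then show ?thesis using that by auto
  qed
  have mpos: "?m > 0" using j' assms(4) by auto
  show "ereal (1 / ?S) * g1 k lam \<phi> x \<le> g2 k lam \<phi> x"
    unfolding g2_def
  proof (rule Inf_greatest)
    fix b assume "b \<in> {Max ((\<lambda>i. \<phi> i (y i)) ` {..<k}) | y. (\<Sum>i<k. lam i *\<^sub>R y i) = x}"
    then obtain y where y: "(\<Sum>i<k. lam i *\<^sub>R y i) = x" and b: "b = Max ((\<lambda>i. \<phi> i (y i)) ` {..<k})" by auto
    let ?M = "Max ((\<lambda>i. \<phi> i (y i)) ` {..<k})"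
    have "g1 k lam \<phi> x \<le> (\<Sum>i<k. ereal (lam i) * \<phi> i (y i))"
      unfolding g1_def using y by (intro Inf_lower) auto
    also have "\<dots> \<le> ereal ?S * ?M"
      using ptwise1[of k "\<lambda>i. \<phi> i (y i)" lam] assms by auto
    finally have "ereal (1 / ?S) * g1 k lam \<phi> x \<le> ereal (1 / ?S) * (ereal ?S * ?M)"
      using Spos by (intro ereal_mult_left_mono) auto
    also have "\<dots> = ?M" using Spos by (simp add: mult.assoc[symmetric] times_ereal.simps)
    finally show "ereal (1 / ?S) * g1 k lam \<phi> x \<le> b" using b by simp
  qed
  have "ereal ?m * g2 k lam \<phi> x \<le> g1 k lam \<phi> x"
    unfolding g1_def
  proof (rule Inf_greatest)
    fix b assume "b \<in> {(\<Sum>i<k. ereal (lam i) * \<phi> i (y i)) | y. (\<Sum>i<k. lam i *\<^sub>R y i) = x}"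
    then obtain y where y: "(\<Sum>i<k. lam i *\<^sub>R y i) = x" and b: "b = (\<Sum>i<k. ereal (lam i) * \<phi> i (y i))" by auto
    let ?T = "\<Sum>i<k. ereal (lam i) * \<phi> i (y i)"
    have "g2 k lam \<phi> x \<le> Max ((\<lambda>i. \<phi> i (y i)) ` {..<k})"
      unfolding g2_def using y by (intro Inf_lower) auto
    also have "\<dots> \<le> ereal (1 / ?m) * ?T"
      using ptwise2[of k "\<lambda>i. \<phi> i (y i)" lam] assms by auto
    finally have "ereal ?m * g2 k lam \<phi> x \<le> ereal ?m * (ereal (1 / ?m) * ?T)"
      using mpos by (intro ereal_mult_left_mono) auto
    also have "\<dots> = ?T" using mpos by (simp add: mult.assoc[symmetric] times_ereal.simps)
    finally show "ereal ?m * g2 k lam \<phi> x \<le> b" using b by simp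
  qed
  hence "ereal (1 / ?m) * (ereal ?m * g2 k lam \<phi> x) \<le> ereal (1 / ?m) * g1 k lam \<phi> x"
    using mpos by (intro ereal_mult_left_mono) auto
  moreover have "ereal (1 / ?m) * (ereal ?m * g2 k lam \<phi> x) = g2 k lam \<phi> x"
    using mpos by (simp add: mult.assoc[symmetric] times_ereal.simps)
  ultimately show "g2 k lam \<phi> x \<le> ereal (1 / ?m) * g1 k lam \<phi> x" by simp
qed

end
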